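(* Let $1\le r\le s\le t$ and let $u=ABCd$, $v=A'B'C'd'$ be vertices of $E3C(r,s,t)$ with $A=A'$, $B\ne B'$, $C\ne C'$ and $d=d'$. Then there exist $2r+2$ pairwise internally disjoint $u$–$v$ paths in $E3C(r,s,t)$, each of length at most $s+t+7$ if $d\in\{0,1\}$, and each of length at most $s+t+5$ if $d=2$.
   Context: The exchanged 3-ary $n$-cube $E3C(r,s,t)$ ($r,s,t\ge1$, $n=r+s+t+1$): vertices are strings written $x=ABCd$ with $A\in\{0,1,2\}^r$, $B\in\{0,1,2\}^s$, $C\in\{0,1,2\}^t$, $d\in\{0,1,2\}$. Two distinct vertices $x=ABCd$, $y=A'B'C'd'$ are adjacent iff one of: (E0) $A=A',B=B',C=C'$ and $d\ne d'$; (E1) $d=d'=0$, $A=A'$, $B=B'$ and $C,C'$ differ in exactly one position; (E2) $d=d'=1$, $A=A'$, $C=C'$ and $B,B'$ differ in exactly one position; (E3) $d=d'=2$, $B=B'$, $C=C'$ and $A,A'$ differ in exactly one position. Paths are internally disjoint if they share no vertices other than their endpoints; length = number of edges. *)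

theory Defs
  imports Main
begin

type_synonym vtx = "nat list \<times> nat list \<times> nat list \<times> nat"

definition ternary_strings :: "nat \<Rightarrow> nat list set" where
  "ternary_strings k = {w. length w = k \<and> set w \<subseteq> {0,1,2}}"

definition E3C_vertices :: "nat \<Rightarrow> nat \<Rightarrow> nat \<Rightarrow> vtx set" where
  "E3C_vertices r s t =
     {(A,B,C,d). A \<in> ternary_strings r \<and> B \<in> ternary_strings s \<and>
                 C \<in> ternary_strings t \<and> d \<in> {0,1,2}}"

definition differ_one :: "nat list \<Rightarrow> nat list \<Rightarrow> bool" where
  "differ_one X Y \<longleftrightarrow> length X = length Y \<and> card {i. i < length X \<and> X ! i \<noteq> Y ! i} = 1"

definition E3C_adj :: "nat \<Rightarrow> nat \<Rightarrow> nat \<Rightarrow> vtx \<Rightarrow> vtx \<Rightarrow> bool" where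
  "E3C_adj r s t x y \<longleftrightarrow>
     x \<in> E3C_vertices r s t \<and> y \<in> E3C_vertices r s t \<and> x \<noteq> y \<and>
     (case x of (A,B,C,d) \<Rightarrow> case y of (A',B',C',d') \<Rightarrow>
        (A = A' \<and> B = B' \<and> C = C' \<and> d \<noteq> d') \<or>
        (d = 0 \<and> d' = 0 \<and> A = A' \<and> B = B' \<and> differ_one C C') \<or>
        (d = 1 \<and> d' = 1 \<and> A = A' \<and> C = C' \<and> differ_one B B') \<or>
        (d = 2 \<and> d' = 2 \<and> B = B' \<and> C = C' \<and> differ_one A A'))"

definition E3C_path :: "nat \<Rightarrow> nat \<Rightarrow> nat \<Rightarrow> vtx \<Rightarrow> vtx \<Rightarrow> vtx list \<Rightarrow> bool" where
  "E3C_path r s t u v p \<longleftrightarrow>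
     p \<noteq> [] \<and> hd p = u \<and> last p = v \<and> distinct p \<and>
     (\<forall>i. Suc i < length p \<longrightarrow> E3C_adj r s t (p ! i) (p ! Suc i))"

definition path_len :: "vtx list \<Rightarrow> nat" where
  "path_len p = length p - 1"

definition internally_disjoint :: "vtx \<Rightarrow> vtx \<Rightarrow> vtx list \<Rightarrow> vtx list \<Rightarrow> bool" where
  "internally_disjoint u v p q \<longleftrightarrow> set p \<inter> set q \<subseteq> {u, v}"

end

theory Submission
  imports Defs
begin



definition dset :: "nat list \<Rightarrow> nat list \<Rightarrow> nat set" where
  "dset X Y = {i. i < length X \<and> X ! i \<noteq> Y ! i}"

lemma finite_dset[simp]: "finite (dset X Y)"
  unfolding dset_def by auto

lemma differ_one_dset: "differ_one X Y \<longleftrightarrow> length X = length Y \<and> card (dset X Y) = 1"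
  unfolding differ_one_def dset_def by simp

lemma dset_Nil[simp]: "dset [] Y = {}"
  by (simp add: dset_def)

lemma dset_Cons: "dset (x#xs) (y#ys) = (if x \<noteq> y then {0} else {}) \<union> Suc ` dset xs ys"
proof (rule set_eqI)
  fix i show "i \<in> dset (x#xs) (y#ys) \<longleftrightarrow> i \<in> (if x \<noteq> y then {0} else {}) \<union> Suc ` dset xs ys"
    by (cases i) (auto simp: dset_def)
qed

lemma card_dset_Cons: "card (dset (x#xs) (y#ys)) = (if x \<noteq> y then 1 else 0) + card (dset xs ys)"
proof -
  have "card (Suc ` dset xs ys) = card (dset xs ys)" by (simp add: card_image)
  moreover have "0 \<notin> Suc ` dset xs ys" by auto
  ultimately show ?thesis by (simp add: dset_Cons)
qed

lemma dset_upd: "i < length X \<Longrightarrow> dset (X[i:=a]) Y = (dset X Y - {i}) \<union> (if a \<noteq> Y!i then {i} else {})"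
  unfolding dset_def by (auto simp: nth_list_update)

lemma dset_upd2: "i < length Y \<Longrightarrow> length X = length Y \<Longrightarrow> dset X (Y[i:=a]) = (dset X Y - {i}) \<union> (if a \<noteq> X!i then {i} else {})"
  unfolding dset_def by (auto simp: nth_list_update)

lemma dset_sub: "dset X Y \<subseteq> {..<length X}"
  unfolding dset_def by auto

lemma card_dset_le: "card (dset X Y) \<le> length X"
  using card_mono[OF _ dset_sub] by fastforce

lemma dset_empty: "length X = length Y \<Longrightarrow> dset X Y = {} \<longleftrightarrow> X = Y"
  unfolding dset_def by (auto simp: list_eq_iff_nth_eq)

lemma differ_one_upd: "i < length X \<Longrightarrow> a \<noteq> X!i \<Longrightarrow> differ_one X (X[i:=a])"
proof -
  assume "i < length X" "a \<noteq> X!i"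
  then have "dset X (X[i:=a]) = {i}" unfolding dset_def by (auto simp: nth_list_update)
  then show ?thesis by (simp add: differ_one_dset)
qed

lemma dset_sym: "length X = length Y \<Longrightarrow> dset X Y = dset Y X"
  unfolding dset_def by auto

lemma differ_one_sym: "differ_one X Y \<Longrightarrow> differ_one Y X"
  unfolding differ_one_dset using dset_sym by metis

lemma differ_one_ne: "differ_one X Y \<Longrightarrow> X \<noteq> Y"
  unfolding differ_one_def by auto

fun walk :: "nat list \<Rightarrow> nat list \<Rightarrow> nat list list" where
  "walk [] ys = [[]]"
| "walk (x#xs) [] = [x#xs]"
| "walk (x#xs) (y#ys) = (if x = y then [] else [x#xs]) @ map (Cons y) (walk xs ys)"

lemma walk_ne[simp]: "walk X Y \<noteq> []"
  by (induction X Y rule: walk.induct) auto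

lemma hd_walk[simp]: "length X = length Y \<Longrightarrow> hd (walk X Y) = X"
  by (induction X Y rule: walk.induct) (auto simp: hd_map)

lemma last_walk[simp]: "length X = length Y \<Longrightarrow> last (walk X Y) = Y"
  by (induction X Y rule: walk.induct) (auto simp: last_map)

lemma length_walk: "length X = length Y \<Longrightarrow> length (walk X Y) = card (dset X Y) + 1"
  by (induction X Y rule: walk.induct) (auto simp: card_dset_Cons)

lemma set_walk: "length X = length Y \<Longrightarrow> Z \<in> set (walk X Y) \<Longrightarrow>
   length Z = length X \<and> (\<forall>k<length X. Z!k = X!k \<or> Z!k = Y!k)"
proof (induction X Y arbitrary: Z rule: walk.induct)
  case (3 x xs y ys)
  have l: "length xs = length ys" using 3(2) by simp
  from 3(3) consider "Z = x#xs" | Z' where "Z = y#Z'" "Z' \<in> set (walk xs ys)"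
    by (auto split: if_splits)
  then show ?case
  proof cases
    case 1 then show ?thesis by simp
  next
    case 2
    from 3(1)[OF l 2(2)] have ih: "length Z' = length xs" "\<forall>k<length xs. Z'!k = xs!k \<or> Z'!k = ys!k" by auto
    show ?thesis
    proof (intro conjI allI impI)
      show "length Z = length (x#xs)" using 2 ih by simp
      fix k assume "k < length (x#xs)"
      then show "Z!k = (x#xs)!k \<or> Z!k = (y#ys)!k" using 2 ih by (cases k) auto
    qed
  qed
qed auto

lemma distinct_walk: "distinct (walk X Y)"
  by (induction X Y rule: walk.induct) (auto simp: distinct_map)

lemma differ_one_Cons_same: "differ_one (y#xs) (y#ys) \<longleftrightarrow> differ_one xs ys"
  by (simp add: differ_one_dset card_dset_Cons)

lemma differ_one_Cons_diff: "x \<noteq> y \<Longrightarrow> differ_one (x#xs) (y#xs)"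
proof -
  have "dset xs xs = {}" by (simp add: dset_def)
  then show "x \<noteq> y \<Longrightarrow> differ_one (x#xs) (y#xs)" by (simp add: differ_one_dset card_dset_Cons)
qed

lemma succ_walk: "length X = length Y \<Longrightarrow> successively differ_one (walk X Y)"
proof (induction X Y rule: walk.induct)
  case (3 x xs y ys)
  have m: "successively differ_one (map (Cons y) (walk xs ys))"
    using 3 by (simp add: successively_map differ_one_Cons_same)
  show ?case
  proof (cases "x = y")
    case True then show ?thesis using m by simp
  next
    case False
    then show ?thesis using m 3(2)
      by (auto simp: successively_append_iff successively_Cons hd_map differ_one_Cons_diff)
  qed
qed auto

lemma walk_tern: "X \<in> ternary_strings k \<Longrightarrow> Y \<in> ternary_strings k \<Longrightarrow> Z \<in> set (walk X Y) \<Longrightarrow> Z \<in> ternary_strings k"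
proof -
  assume a: "X \<in> ternary_strings k" "Y \<in> ternary_strings k" "Z \<in> set (walk X Y)"
  then have l: "length X = length Y" by (simp add: ternary_strings_def)
  from set_walk[OF l a(3)] have z: "length Z = length X" "\<forall>j<length X. Z!j = X!j \<or> Z!j = Y!j" by auto
  have "set Z \<subseteq> {0,1,2}"
  proof
    fix e assume "e \<in> set Z"
    then obtain j where j: "j < length Z" "Z!j = e" by (auto simp: in_set_conv_nth)
    then have "e = X!j \<or> e = Y!j" using z by auto
    moreover have "X!j \<in> set X" "Y!j \<in> set Y" using j z l by auto
    moreover have "set X \<subseteq> {0,1,2}" "set Y \<subseteq> {0,1,2}" using a unfolding ternary_strings_def by auto
    ultimately show "e \<in> {0,1,2}" by auto
  qed
  then show ?thesis using z a unfolding ternary_strings_def by auto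
qed

lemma upd_tern: "X \<in> ternary_strings k \<Longrightarrow> a \<le> 2 \<Longrightarrow> X[i:=a] \<in> ternary_strings k"
  unfolding ternary_strings_def using set_update_subset_insert[of X i a] by auto

lemma adj0: "A \<in> ternary_strings r \<Longrightarrow> B \<in> ternary_strings s \<Longrightarrow> C \<in> ternary_strings t \<Longrightarrow>
  d \<le> 2 \<Longrightarrow> d' \<le> 2 \<Longrightarrow> d \<noteq> d' \<Longrightarrow> E3C_adj r s t (A,B,C,d) (A,B,C,d')"
  unfolding E3C_adj_def E3C_vertices_def by auto

lemma adjC: "A \<in> ternary_strings r \<Longrightarrow> B \<in> ternary_strings s \<Longrightarrow> C \<in> ternary_strings t \<Longrightarrow>
  C' \<in> ternary_strings t \<Longrightarrow> differ_one C C' \<Longrightarrow> E3C_adj r s t (A,B,C,0) (A,B,C',0)"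
  unfolding E3C_adj_def E3C_vertices_def using differ_one_ne by auto

lemma adjB: "A \<in> ternary_strings r \<Longrightarrow> B \<in> ternary_strings s \<Longrightarrow> C \<in> ternary_strings t \<Longrightarrow>
  B' \<in> ternary_strings s \<Longrightarrow> differ_one B B' \<Longrightarrow> E3C_adj r s t (A,B,C,1) (A,B',C,1)"
  unfolding E3C_adj_def E3C_vertices_def using differ_one_ne by auto

lemma adjA: "A \<in> ternary_strings r \<Longrightarrow> B \<in> ternary_strings s \<Longrightarrow> C \<in> ternary_strings t \<Longrightarrow>
  A' \<in> ternary_strings r \<Longrightarrow> differ_one A A' \<Longrightarrow> E3C_adj r s t (A,B,C,2) (A',B,C,2)"
  unfolding E3C_adj_def E3C_vertices_def using differ_one_ne by auto

lemma walkC_succ: "A \<in> ternary_strings r \<Longrightarrow> B \<in> ternary_strings s \<Longrightarrow> X \<in> ternary_strings t \<Longrightarrow>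
  Y \<in> ternary_strings t \<Longrightarrow> successively (E3C_adj r s t) (map (\<lambda>Z. (A,B,Z,0)) (walk X Y))"
  unfolding successively_map
  apply (rule successively_mono[OF succ_walk])
   apply (simp add: ternary_strings_def)
  using adjC walk_tern by blast

lemma walkB_succ: "A \<in> ternary_strings r \<Longrightarrow> C \<in> ternary_strings t \<Longrightarrow> X \<in> ternary_strings s \<Longrightarrow>
  Y \<in> ternary_strings s \<Longrightarrow> successively (E3C_adj r s t) (map (\<lambda>Z. (A,Z,C,1)) (walk X Y))"
  unfolding successively_map
  apply (rule successively_mono[OF succ_walk])
   apply (simp add: ternary_strings_def)
  using adjB walk_tern by blast

lemma path_intro:
  assumes "u \<noteq> v" "distinct M" "u \<notin> set M" "v \<notin> set M" "successively (E3C_adj r s t) (u # M @ [v])"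
  shows "E3C_path r s t u v (u # M @ [v])"
  using assms unfolding E3C_path_def successively_conv_nth by auto

lemma path_len_eq: "path_len (u # M @ [v]) = length M + 1"
  unfolding path_len_def by simp

lemma assemble:
  assumes "distinct ks"
    and "\<And>k. k \<in> set ks \<Longrightarrow> E3C_path r s t u v (u # M k @ [v]) \<and> length (M k) + 1 \<le> L"
    and "\<And>k k'. k \<in> set ks \<Longrightarrow> k' \<in> set ks \<Longrightarrow> k \<noteq> k' \<Longrightarrow> set (M k) \<inter> set (M k') = {}"
  shows "\<exists>P. length P = length ks \<and> (\<forall>i<length P. E3C_path r s t u v (P!i) \<and> path_len (P!i) \<le> L) \<and>
     (\<forall>i<length P. \<forall>j<length P. i \<noteq> j \<longrightarrow> internally_disjoint u v (P!i) (P!j))"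
proof (intro exI conjI allI impI)
  let ?P = "map (\<lambda>k. u # M k @ [v]) ks"
  show "length ?P = length ks" by simp
  fix i assume i: "i < length ?P"
  then have "ks!i \<in> set ks" by simp
  then show "E3C_path r s t u v (?P!i)" "path_len (?P!i) \<le> L"
    using assms(2) i by (auto simp: path_len_eq)
  fix j assume j: "j < length ?P" and ij: "i \<noteq> j"
  then have "ks!i \<noteq> ks!j" using assms(1) i by (simp add: nth_eq_iff_index_eq)
  then have "set (M (ks!i)) \<inter> set (M (ks!j)) = {}" using assms(3) i j by simp
  then show "internally_disjoint u v (?P!i) (?P!j)"
    using i j unfolding internally_disjoint_def by auto
qed




lemma card_dset_tern: "X \<in> ternary_strings k \<Longrightarrow> card (dset X Y) \<le> k"
  using card_dset_le[of X Y] by (simp add: ternary_strings_def)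

lemma len_tern: "X \<in> ternary_strings k \<Longrightarrow> length X = k"
  by (simp add: ternary_strings_def)

lemma nth_tern: "X \<in> ternary_strings k \<Longrightarrow> i < k \<Longrightarrow> X!i \<le> 2"
proof -
  assume a: "X \<in> ternary_strings k" "i < k"
  then have "X!i \<in> set X" by (simp add: ternary_strings_def)
  then have "X!i \<in> {0,1,2}" using a(1) unfolding ternary_strings_def by blast
  then show ?thesis by auto
qed

definition shiftv :: "nat \<Rightarrow> nat \<Rightarrow> nat" where
  "shiftv a b = (if b = 0 then (if a = 0 then 1 else if a = 1 then 2 else 0) else (if a = 0 then 2 else if a = 1 then 0 else 1))"

lemma le2_cases: "a \<le> (2::nat) \<Longrightarrow> a = 0 \<or> a = 1 \<or> a = 2" by auto
lemma le1_cases: "a \<le> (1::nat) \<Longrightarrow> a = 0 \<or> a = 1" by auto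

lemma shiftv_ne: "a \<le> 2 \<Longrightarrow> b \<le> 1 \<Longrightarrow> shiftv a b \<noteq> a"
  unfolding shiftv_def using le2_cases[of a] le1_cases[of b] by auto

lemma shiftv_le: "shiftv a b \<le> 2"
  unfolding shiftv_def by simp

lemma shiftv_inj: "a \<le> 2 \<Longrightarrow> b \<le> 1 \<Longrightarrow> b' \<le> 1 \<Longrightarrow> shiftv a b = shiftv a b' \<Longrightarrow> b = b'"
  unfolding shiftv_def using le2_cases[of a] le1_cases[of b] le1_cases[of b'] by auto

definition alph :: "nat list \<Rightarrow> nat \<Rightarrow> nat list" where
  "alph A n = A[n div 2 := shiftv (A!(n div 2)) (n mod 2)]"

lemma alph_tern: "A \<in> ternary_strings r \<Longrightarrow> alph A n \<in> ternary_strings r"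
  unfolding alph_def by (rule upd_tern) (auto simp: shiftv_le)

lemma alph_pos: "n < 2*r \<Longrightarrow> n div 2 < (r::nat)" by auto

lemma alph_val: "A \<in> ternary_strings r \<Longrightarrow> n < 2*r \<Longrightarrow> shiftv (A!(n div 2)) (n mod 2) \<noteq> A!(n div 2)"
  by (rule shiftv_ne) (auto intro: nth_tern alph_pos)

lemma alph_differ: "A \<in> ternary_strings r \<Longrightarrow> n < 2*r \<Longrightarrow> differ_one A (alph A n)"
  unfolding alph_def
  by (rule differ_one_upd) (auto simp: len_tern alph_val)

lemma alph_ne: "A \<in> ternary_strings r \<Longrightarrow> n < 2*r \<Longrightarrow> alph A n \<noteq> A"
  using alph_differ differ_one_ne by metis

lemma alph_inj: assumes "A \<in> ternary_strings r" "n < 2*r" "m < 2*r" "alph A n = alph A m"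
  shows "n = m"
proof (cases "n div 2 = m div 2")
  case True
  have "alph A n ! (n div 2) = alph A m ! (m div 2)" using assms True by simp
  then have "shiftv (A!(n div 2)) (n mod 2) = shiftv (A!(n div 2)) (m mod 2)"
    using assms True by (simp add: alph_def len_tern)
  moreover have "n mod 2 \<le> 1" "m mod 2 \<le> 1" by auto
  moreover have "A!(n div 2) \<le> 2" using nth_tern[OF assms(1) alph_pos[OF assms(2)]] .
  ultimately have "n mod 2 = m mod 2" using shiftv_inj by blast
  then show ?thesis using True by (metis div_mod_decomp)
next
  case False
  have "alph A n ! (n div 2) \<noteq> A!(n div 2)" using assms(1,2) alph_val[of A r n] alph_pos[of n r]
    by (simp add: alph_def len_tern)
  moreover have "alph A m ! (n div 2) = A!(n div 2)" using False by (simp add: alph_def)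
  ultimately show ?thesis using assms(4) by simp
qed

lemma lwalk: "X \<in> ternary_strings k \<Longrightarrow> Y \<in> ternary_strings k \<Longrightarrow> length (walk X Y) \<le> k + 1"
  using length_walk[of X Y] card_dset_tern[of X k Y] by (simp add: len_tern)

datatype k2 = K1 | K2 | KA "nat list"

locale S2 =
  fixes r s t :: nat and A B C B' C' :: "nat list"
  assumes r1: "1 \<le> r"
    and tA: "A \<in> ternary_strings r" and tB: "B \<in> ternary_strings s" and tB': "B' \<in> ternary_strings s"
    and tC: "C \<in> ternary_strings t" and tC': "C' \<in> ternary_strings t"
    and BB: "B \<noteq> B'" and CC: "C \<noteq> C'"
begin

fun M2 :: "k2 \<Rightarrow> vtx list" where
  "M2 K1 = map (\<lambda>Y. (A,Y,C,1)) (walk B B') @ map (\<lambda>Z. (A,B',Z,0)) (walk C C')"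
| "M2 K2 = map (\<lambda>Z. (A,B,Z,0)) (walk C C') @ map (\<lambda>Y. (A,Y,C',1)) (walk B B')"
| "M2 (KA a) = [(a,B,C,2)] @ map (\<lambda>Y. (a,Y,C,1)) (walk B B') @ map (\<lambda>Z. (a,B',Z,0)) (walk C C') @ [(a,B',C',2)]"

definition ks2 :: "k2 list" where
  "ks2 = [K1, K2] @ map (\<lambda>n. KA (alph A n)) [0..<2*r]"

lemma lB: "length B = length B'" using tB tB' by (simp add: len_tern)
lemma lC: "length C = length C'" using tC tC' by (simp add: len_tern)

lemma ks2_distinct: "distinct ks2"
  unfolding ks2_def by (auto simp: distinct_map inj_on_def intro: alph_inj[OF tA])

lemma ks2_len: "length ks2 = 2*r+2"
  unfolding ks2_def by simp

lemma hB: "card (dset B B') \<le> s" using card_dset_tern tB by blast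
lemma hC: "card (dset C C') \<le> t" using card_dset_tern tC by blast

lemmas wsimps = successively_append_iff successively_Cons hd_map last_map walk_ne hd_walk last_walk lB lC

lemma path2: assumes "k \<in> set ks2"
  shows "E3C_path r s t (A,B,C,2) (A,B',C',2) ((A,B,C,2) # M2 k @ [(A,B',C',2)]) \<and> length (M2 k) + 1 \<le> s + t + 5"
proof -
  have wB: "successively (E3C_adj r s t) (map (\<lambda>Y. (a,Y,c,1)) (walk B B'))"
    if "a \<in> ternary_strings r" "c \<in> ternary_strings t" for a c
    using walkB_succ that tB tB' by blast
  have wC: "successively (E3C_adj r s t) (map (\<lambda>Z. (a,b,Z,0)) (walk C C'))"
    if "a \<in> ternary_strings r" "b \<in> ternary_strings s" for a b
    using walkC_succ that tC tC' by blast
  show ?thesis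
  proof (cases k)
    case K1
    show ?thesis unfolding K1
      apply (intro conjI path_intro)
      using tA tB tB' tC tC' BB CC hB hC
           apply (auto simp: distinct_map inj_on_def distinct_walk)[4]
      apply (simp add: wsimps)
      using wB wC tA tB tB' tC tC' apply (auto intro!: adj0)[1]
      using lwalk[OF tB tB'] lwalk[OF tC tC'] by simp
  next
    case K2
    show ?thesis unfolding K2
      apply (intro conjI path_intro)
      using tA tB tB' tC tC' BB CC hB hC
           apply (auto simp: distinct_map inj_on_def distinct_walk)[4]
      apply (simp add: wsimps)
      using wB wC tA tB tB' tC tC' apply (auto intro!: adj0)[1]
      using lwalk[OF tB tB'] lwalk[OF tC tC'] by simp
  next
    case (KA a)
    then obtain n where n: "n < 2*r" "a = alph A n" using assms by (auto simp: ks2_def)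
    have ta: "a \<in> ternary_strings r" using n alph_tern[OF tA] by simp
    have aA: "a \<noteq> A" using n alph_ne[OF tA] by simp
    have da: "differ_one A a" "differ_one a A" using n alph_differ[OF tA] differ_one_sym by auto
    show ?thesis unfolding KA
      apply (intro conjI path_intro)
      using tA tB tB' tC tC' BB CC hB hC aA
           apply (auto simp: distinct_map inj_on_def distinct_walk)[4]
      apply (simp add: wsimps)
      using wB wC tA tB tB' tC tC' ta da apply (auto intro!: adj0 adjA)[1]
      using lwalk[OF tB tB'] lwalk[OF tC tC'] by simp
  qed
qed

lemma disj2: assumes "k \<in> set ks2" "k' \<in> set ks2" "k \<noteq> k'"
  shows "set (M2 k) \<inter> set (M2 k') = {}"
proof -
  have aA: "a \<noteq> A" if "KA a \<in> set ks2" for a using that alph_ne tA by (auto simp: ks2_def)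
  have a1: "\<And>a. k = KA a \<Longrightarrow> a \<noteq> A" and a2: "\<And>a. k' = KA a \<Longrightarrow> a \<noteq> A"
    using aA assms by auto
  show ?thesis using assms(3) CC BB a1 a2 by (cases k; cases k') auto
qed

theorem main2: "\<exists>P. length P = 2*r+2 \<and> (\<forall>i<length P. E3C_path r s t (A,B,C,2) (A,B',C',2) (P!i) \<and> path_len (P!i) \<le> s+t+5) \<and>
     (\<forall>i<length P. \<forall>j<length P. i \<noteq> j \<longrightarrow> internally_disjoint (A,B,C,2) (A,B',C',2) (P!i) (P!j))"
  using assemble[OF ks2_distinct, where r=r and s=s and t=t and u="(A,B,C,2)" and M=M2 and v="(A,B',C',2)" and L="s+t+5"] path2 disj2 ks2_len
  by auto

end




definition nxt :: "nat set \<Rightarrow> nat \<Rightarrow> nat" where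
  "nxt D i = (if \<exists>j\<in>D. i < j then LEAST j. j \<in> D \<and> i < j else LEAST j. j \<in> D)"

lemma nxt_in: "i \<in> D \<Longrightarrow> nxt D i \<in> D"
  unfolding nxt_def by (auto intro: LeastI2_ex)

lemma nxt_ne: assumes "finite D" "i \<in> D" "card D \<ge> 2" shows "nxt D i \<noteq> i"
proof (cases "\<exists>j\<in>D. i < j")
  case True
  then have "i < (LEAST j. j \<in> D \<and> i < j)" by (auto intro: LeastI2_ex)
  then show ?thesis using True unfolding nxt_def by simp
next
  case False
  then have le: "\<forall>j\<in>D. j \<le> i" by auto
  show ?thesis
  proof
    assume "nxt D i = i"
    then have "(LEAST j. j \<in> D) = i" using False unfolding nxt_def by simp
    then have "\<forall>j\<in>D. i \<le> j" by (metis Least_le)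
    then have "D = {i}" using le assms(2) by force
    then show False using assms(3) by simp
  qed
qed

lemma nxt_inj: "inj_on (nxt D) D"
proof (rule inj_onI)
  fix i i' assume a: "i \<in> D" "i' \<in> D" "nxt D i = nxt D i'"
  have gt: "i < nxt D i" if "\<exists>j\<in>D. i < j" for i
    using that unfolding nxt_def by (auto intro: LeastI2_ex)
  have least: "nxt D i \<le> j" if "\<exists>j\<in>D. i < j" "j \<in> D" "i < j" for i j
    using that unfolding nxt_def by (auto intro: Least_le)
  have mn: "nxt D i \<le> j" if "\<not>(\<exists>j\<in>D. i < j)" "j \<in> D" for i j
    using that unfolding nxt_def by (auto intro: Least_le)
  show "i = i'"
  proof (rule ccontr)
    assume "i \<noteq> i'"
    then consider "i < i'" | "i' < i" by linarith
    then show False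
    proof cases
      case 1
      then have e: "\<exists>j\<in>D. i < j" using a by blast
      show False
      proof (cases "\<exists>j\<in>D. i' < j")
        case True
        then show False using least[OF e a(2) 1] gt[OF True] a by simp
      next
        case False
        then show False using mn[OF False, of i] a gt[OF e] by simp
      qed
    next
      case 2
      then have e: "\<exists>j\<in>D. i' < j" using a by blast
      show False
      proof (cases "\<exists>j\<in>D. i < j")
        case True
        then show False using least[OF e a(1) 2] gt[OF True] a by simp
      next
        case False
        then show False using mn[OF False, of i'] a gt[OF e] by simp
      qed
    qed
  qed
qed

datatype k0 = KS1 | KS2 | KF nat nat | KO nat

locale S0 =
  fixes r s t :: nat and A B C B' C' :: "nat list"
  assumes r1: "1 \<le> r" and rt: "r \<le> t"
    and tA: "A \<in> ternary_strings r" and tB: "B \<in> ternary_strings s" and tB': "B' \<in> ternary_strings s"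
    and tC: "C \<in> ternary_strings t" and tC': "C' \<in> ternary_strings t"
    and BB: "B \<noteq> B'" and CC: "C \<noteq> C'"
begin

definition D where "D = dset C C'"
definition h where "h = card D"
definition DB where "DB = dset B B'"
definition offv where "offv i = (if C!i \<noteq> C'!i then 3 - C!i - C'!i else shiftv (C!i) 0)"
definition off2 where "off2 i = shiftv (C!i) 1"
definition kb where "kb = (SOME k. k \<in> DB)"
definition Bo where "Bo = B[kb := 3 - B!kb - B'!kb]"
definition a0 where "a0 = alph A 1"
definition ai where "ai i = alph A (2*i)"
definition Cs where "Cs i = C[i := C'!i]"
definition Cpp where "Cpp i = C'[nxt D i := C!(nxt D i)]"

fun M0 :: "k0 \<Rightarrow> vtx list" where
  "M0 KS1 = (if h = 1 then map (\<lambda>Y. (A,Y,C,1)) (walk B B') @ [(A,B',C,0)]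
      else [(A,B,C,1), (A,Bo,C,1)] @ map (\<lambda>Z. (A,Bo,Z,0)) (walk C C') @ map (\<lambda>Y. (A,Y,C',1)) (walk Bo B'))"
| "M0 KS2 = [(A,B,C,2), (a0,B,C,2)] @ map (\<lambda>Y. (a0,Y,C,1)) (walk B B') @ map (\<lambda>Z. (a0,B',Z,0)) (walk C C')
      @ [(a0,B',C',2), (A,B',C',2)]"
| "M0 (KF i x) = [(A,B,C[i:=x],0)] @ map (\<lambda>Y. (A,Y,C[i:=x],1)) (walk B B')
      @ map (\<lambda>Z. (A,B',Z,0)) (walk (C[i:=x]) (C'[i:=x]))"
| "M0 (KO i) = (if h = 1 then [(A,B,C',0)] @ map (\<lambda>Y. (A,Y,C',1)) (walk B B')
      else [(A,B,Cs i,0), (A,B,Cs i,2), (ai i,B,Cs i,2)] @ map (\<lambda>Y. (ai i,Y,Cs i,1)) (walk B B')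
        @ map (\<lambda>Z. (ai i,B',Z,0)) (walk (Cs i) (Cpp i)) @ [(ai i,B',Cpp i,2), (A,B',Cpp i,2), (A,B',Cpp i,0)])"

definition keyn where
  "keyn n = (if n mod 2 = 0 then KF (n div 2) (offv (n div 2))
     else if C!(n div 2) = C'!(n div 2) then KF (n div 2) (off2 (n div 2)) else KO (n div 2))"

definition ks0 where "ks0 = [KS1, KS2] @ map keyn [0..<2*r]"

lemma lB: "length B = length B'" using tB tB' by (simp add: len_tern)
lemma lC: "length C = length C'" using tC tC' by (simp add: len_tern)
lemma lenC: "length C = t" using tC by (simp add: len_tern)
lemma lenC': "length C' = t" using tC' by (simp add: len_tern)
lemma lenB: "length B = s" using tB by (simp add: len_tern)
lemma lenB': "length B' = s" using tB' by (simp add: len_tern)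
lemma lenA: "length A = r" using tA by (simp add: len_tern)

lemma hB: "card (dset B B') \<le> s" using card_dset_tern tB by blast
lemma hC: "card (dset C C') \<le> t" using card_dset_tern tC by blast
lemma h_le: "h \<le> t" using hC by (simp add: h_def D_def)
lemma h_pos: "h \<ge> 1"
proof -
  have "D \<noteq> {}" using dset_empty[OF lC] CC by (simp add: D_def)
  then show ?thesis unfolding h_def by (simp add: D_def Suc_leI card_gt_0_iff)
qed

lemma D_iff: "i \<in> D \<longleftrightarrow> i < t \<and> C!i \<noteq> C'!i"
  by (simp add: D_def dset_def lenC)

lemma h1_uniq: "h = 1 \<Longrightarrow> i \<in> D \<Longrightarrow> j \<in> D \<Longrightarrow> i = j"
  unfolding h_def by (metis card_1_singletonE singletonD)

lemma h1_differ: "h = 1 \<Longrightarrow> differ_one C C'"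
  by (simp add: differ_one_dset lC h_def D_def)

lemma Cit: "i < t \<Longrightarrow> C!i \<le> 2" using nth_tern tC by blast
lemma C'it: "i < t \<Longrightarrow> C'!i \<le> 2" using nth_tern tC' by blast

lemma offv_props: "i < t \<Longrightarrow> offv i \<le> 2 \<and> offv i \<noteq> C!i \<and> offv i \<noteq> C'!i"
  using le2_cases[OF Cit[of i]] le2_cases[OF C'it[of i]] unfolding offv_def shiftv_def by auto

lemma off2_props: "i < t \<Longrightarrow> C!i = C'!i \<Longrightarrow> off2 i \<le> 2 \<and> off2 i \<noteq> C!i \<and> off2 i \<noteq> C'!i \<and> off2 i \<noteq> offv i"
  using le2_cases[OF Cit[of i]] unfolding offv_def off2_def shiftv_def by auto

lemma keyn_inj: "inj_on keyn {0..<2*r}"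
proof (rule inj_onI)
  fix n m assume a: "n \<in> {0..<2*r}" "m \<in> {0..<2*r}" "keyn n = keyn m"
  have it: "n div 2 < t" "m div 2 < t" using a rt by auto
  have same: "n div 2 = m div 2" using a(3) unfolding keyn_def by (auto split: if_splits)
  have "n mod 2 = m mod 2"
  proof (rule ccontr)
    assume "n mod 2 \<noteq> m mod 2"
    then show False using a(3) same off2_props[OF it(1)] off2_props[OF it(2)] unfolding keyn_def
      by (auto split: if_splits)
  qed
  then show "n = m" using same by (metis div_mod_decomp)
qed

lemma ks0_distinct: "distinct ks0"
  unfolding ks0_def using keyn_inj by (auto simp: distinct_map keyn_def split: if_splits)

lemma ks0_len: "length ks0 = 2*r+2"
  unfolding ks0_def by simp

lemma ks0_mem: "k \<in> set ks0 \<Longrightarrow> k = KS1 \<or> k = KS2 \<or> (\<exists>n<2*r. k = keyn n)"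
  unfolding ks0_def by auto

lemma KF_props: assumes "KF i x \<in> set ks0" shows "i < r \<and> i < t \<and> x \<le> 2 \<and> x \<noteq> C!i \<and> x \<noteq> C'!i"
proof -
  obtain n where n: "n < 2*r" "keyn n = KF i x" using ks0_mem[OF assms] by auto
  have i: "i = n div 2" using n(2) unfolding keyn_def by (auto split: if_splits)
  have ir: "i < r" using n(1) i by auto
  then have it: "i < t" using rt by simp
  have "x = offv i \<or> (x = off2 i \<and> C!i = C'!i)" using n(2) i unfolding keyn_def by (auto split: if_splits)
  then show ?thesis using offv_props[OF it] off2_props[OF it] ir it by auto
qed

lemma KO_props: assumes "KO i \<in> set ks0" shows "i < r \<and> i \<in> D"
proof -
  obtain n where n: "n < 2*r" "keyn n = KO i" using ks0_mem[OF assms] by auto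
  have i: "i = n div 2" using n(2) unfolding keyn_def by (auto split: if_splits)
  have ir: "i < r" using n(1) i by auto
  then have it: "i < t" using rt by simp
  have "C!i \<noteq> C'!i" using n(2) i unfolding keyn_def by (auto split: if_splits)
  then show ?thesis using ir it D_iff by auto
qed

end




context S0
begin

lemma DB_ne: "DB \<noteq> {}" using dset_empty[OF lB] BB by (simp add: DB_def)
lemma kb_in: "kb \<in> DB" unfolding kb_def using DB_ne by (simp add: some_in_eq)
lemma kb_props: "kb < s" "B!kb \<noteq> B'!kb"
  using kb_in by (auto simp: DB_def dset_def lenB)
lemma Bkb: "B!kb \<le> 2" "B'!kb \<le> 2" using nth_tern tB tB' kb_props by auto
lemma third: "B!kb \<le> 2 \<Longrightarrow> B'!kb \<le> 2 \<Longrightarrow> B!kb \<noteq> B'!kb \<Longrightarrow>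
   3 - B!kb - B'!kb \<le> 2 \<and> 3 - B!kb - B'!kb \<noteq> B!kb \<and> 3 - B!kb - B'!kb \<noteq> B'!kb"
  using le2_cases[of "B!kb"] le2_cases[of "B'!kb"] by auto
lemma tBo: "Bo \<in> ternary_strings s" unfolding Bo_def using third[OF Bkb kb_props(2)] by (intro upd_tern[OF tB]) auto
lemma dBo: "differ_one B Bo" unfolding Bo_def using third Bkb kb_props lenB by (auto intro: differ_one_upd)
lemma Bo_ne: "Bo \<noteq> B" "Bo \<noteq> B'"
proof -
  show "Bo \<noteq> B" using dBo differ_one_ne by metis
  have "Bo!kb \<noteq> B'!kb" unfolding Bo_def using third Bkb kb_props lenB by auto
  then show "Bo \<noteq> B'" by auto
qed

lemma ta0: "a0 \<in> ternary_strings r" unfolding a0_def by (rule alph_tern[OF tA])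
lemma da0: "differ_one A a0" "differ_one a0 A" unfolding a0_def using alph_differ[OF tA, of 1] r1 differ_one_sym by auto
lemma a0_ne: "a0 \<noteq> A" using da0 differ_one_ne by metis

lemma tai: "ai i \<in> ternary_strings r" unfolding ai_def by (rule alph_tern[OF tA])
lemma dai: "i < r \<Longrightarrow> differ_one A (ai i)" "i < r \<Longrightarrow> differ_one (ai i) A"
  unfolding ai_def using alph_differ[OF tA, of "2*i"] differ_one_sym by auto
lemma ai_ne: "i < r \<Longrightarrow> ai i \<noteq> A" using dai differ_one_ne by metis
lemma ai_a0: "i < r \<Longrightarrow> ai i \<noteq> a0"
  unfolding ai_def a0_def using alph_inj[OF tA, of "2*i" 1] r1 by auto
lemma ai_inj: "i < r \<Longrightarrow> j < r \<Longrightarrow> ai i = ai j \<Longrightarrow> i = j"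
  unfolding ai_def using alph_inj[OF tA, of "2*i" "2*j"] by auto

lemma tCs: "i \<in> D \<Longrightarrow> Cs i \<in> ternary_strings t"
proof -
  assume "i \<in> D" then have "i < t" by (simp add: D_iff)
  then have "C'!i \<le> 2" by (rule C'it)
  then show ?thesis unfolding Cs_def by (rule upd_tern[OF tC])
qed
lemma dCs: "i \<in> D \<Longrightarrow> differ_one C (Cs i)"
proof -
  assume "i \<in> D" then have "i < length C" "C'!i \<noteq> C!i" by (auto simp: D_iff lenC)
  then show ?thesis unfolding Cs_def by (rule differ_one_upd)
qed
lemma Cs_nth: "i \<in> D \<Longrightarrow> Cs i ! i = C'!i" unfolding Cs_def using D_iff lenC by auto
lemma Cs_nth2: "k \<noteq> i \<Longrightarrow> Cs i ! k = C!k" unfolding Cs_def by auto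

lemma h2: "h \<noteq> 1 \<Longrightarrow> h \<ge> 2" using h_pos by auto
lemma nxtD: "h \<noteq> 1 \<Longrightarrow> i \<in> D \<Longrightarrow> nxt D i \<in> D \<and> nxt D i \<noteq> i"
proof -
  assume a: "h \<noteq> 1" "i \<in> D"
  have "finite D" by (simp add: D_def)
  moreover have "card D \<ge> 2" using h2[OF a(1)] by (simp add: h_def)
  ultimately show ?thesis using nxt_in[OF a(2)] nxt_ne[of D i] a(2) by blast
qed
lemma nxt_t: "h \<noteq> 1 \<Longrightarrow> i \<in> D \<Longrightarrow> nxt D i < t \<and> C!(nxt D i) \<noteq> C'!(nxt D i)"
  using nxtD[of i] by (simp add: D_iff)
lemma tCpp: "h \<noteq> 1 \<Longrightarrow> i \<in> D \<Longrightarrow> Cpp i \<in> ternary_strings t"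
proof -
  assume a: "h \<noteq> 1" "i \<in> D"
  then have "C!(nxt D i) \<le> 2" using nxt_t Cit by blast
  then show ?thesis unfolding Cpp_def by (rule upd_tern[OF tC'])
qed
lemma dCpp: "h \<noteq> 1 \<Longrightarrow> i \<in> D \<Longrightarrow> differ_one (Cpp i) C'"
proof -
  assume a: "h \<noteq> 1" "i \<in> D"
  then have "nxt D i < length C'" "C!(nxt D i) \<noteq> C'!(nxt D i)" using nxt_t lenC' by auto
  then have "differ_one C' (Cpp i)" unfolding Cpp_def by (rule differ_one_upd)
  then show ?thesis by (rule differ_one_sym)
qed
lemma Cpp_nth: "k < t \<Longrightarrow> Cpp i ! k = C!k \<or> Cpp i ! k = C'!k"
  unfolding Cpp_def by (cases "k = nxt D i") (simp_all add: lenC')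
lemma Cpp_nxt: "h \<noteq> 1 \<Longrightarrow> i \<in> D \<Longrightarrow> Cpp i ! (nxt D i) = C!(nxt D i)"
proof -
  assume a: "h \<noteq> 1" "i \<in> D"
  then have "nxt D i < length C'" using nxt_t lenC' by auto
  then show ?thesis unfolding Cpp_def by simp
qed
lemma Cpp_nxt2: "k \<noteq> nxt D i \<Longrightarrow> Cpp i ! k = C'!k"
  unfolding Cpp_def by simp
lemma Cpp_inj: "h \<noteq> 1 \<Longrightarrow> i \<in> D \<Longrightarrow> j \<in> D \<Longrightarrow> Cpp i = Cpp j \<Longrightarrow> i = j"
proof -
  assume a: "h \<noteq> 1" "i \<in> D" "j \<in> D" "Cpp i = Cpp j"
  show "i = j"
  proof (rule ccontr)
    assume "i \<noteq> j"
    then have "nxt D i \<noteq> nxt D j" using nxt_inj[of D] a unfolding inj_on_def by blast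
    then have "Cpp j ! (nxt D i) = C'!(nxt D i)" by (simp add: Cpp_nxt2)
    moreover have "Cpp i ! (nxt D i) = C!(nxt D i)" using Cpp_nxt[OF a(1) a(2)] .
    moreover have "C!(nxt D i) \<noteq> C'!(nxt D i)" using nxt_t a(1,2) by blast
    ultimately show False using a(4) by simp
  qed
qed

lemma card_CsCpp: "h \<noteq> 1 \<Longrightarrow> i \<in> D \<Longrightarrow> card (dset (Cs i) (Cpp i)) = h - 2"
proof -
  assume a: "h \<noteq> 1" "i \<in> D"
  define j where "j = nxt D i"
  have j: "j \<in> D" "j \<noteq> i" using nxtD[OF a] by (auto simp: j_def)
  have it: "i < t" "j < t" using j a(2) by (auto simp: D_iff)
  have e1: "dset C (Cpp i) = D - {j}"
  proof -
    have "dset C (C'[j := C!j]) = (dset C C' - {j}) \<union> (if C!j \<noteq> C!j then {j} else {})"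
      by (rule dset_upd2) (use it lenC lenC' in auto)
    moreover have "Cpp i = C'[j := C!j]" unfolding Cpp_def j_def ..
    moreover have "dset C C' = D" by (simp add: D_def)
    ultimately show ?thesis by simp
  qed
  have e2: "dset (Cs i) (Cpp i) = (dset C (Cpp i) - {i}) \<union> (if C'!i \<noteq> Cpp i ! i then {i} else {})"
    unfolding Cs_def by (rule dset_upd) (use it lenC in auto)
  have e3: "Cpp i ! i = C'!i" using j(2) Cpp_nxt2[of i i] by (simp add: j_def)
  have "dset (Cs i) (Cpp i) = D - {j} - {i}" using e1 e2 e3 by simp
  moreover have "finite D" by (simp add: D_def)
  ultimately have "card (dset (Cs i) (Cpp i)) = card D - 1 - 1" using j a(2)
    by (simp add: card_Diff_singleton)
  then show ?thesis by (simp add: h_def)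
qed

lemma tCx: "i < t \<Longrightarrow> x \<le> 2 \<Longrightarrow> C[i:=x] \<in> ternary_strings t" by (rule upd_tern[OF tC])
lemma tC'x: "i < t \<Longrightarrow> x \<le> 2 \<Longrightarrow> C'[i:=x] \<in> ternary_strings t" by (rule upd_tern[OF tC'])
lemma dCx: "i < t \<Longrightarrow> x \<noteq> C!i \<Longrightarrow> differ_one C (C[i:=x])" using differ_one_upd lenC by auto
lemma dC'x: "i < t \<Longrightarrow> x \<noteq> C'!i \<Longrightarrow> differ_one (C'[i:=x]) C'" using differ_one_upd differ_one_sym lenC' by auto

lemma Fwalk: assumes "i < t" "Z \<in> set (walk (C[i:=x]) (C'[i:=x]))"
  shows "Z!i = x \<and> (\<forall>k<t. k \<noteq> i \<longrightarrow> Z!k = C!k \<or> Z!k = C'!k)"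
proof -
  have l: "length (C[i:=x]) = length (C'[i:=x])" using lC by simp
  from set_walk[OF l assms(2)] have "\<forall>k<t. Z!k = C[i:=x]!k \<or> Z!k = C'[i:=x]!k" using lenC by simp
  then show ?thesis using assms(1) lenC lenC' by auto
qed

lemma lwB: "length (walk B B') \<le> s + 1" using lwalk[OF tB tB'] .
lemma lwC: "length (walk C C') \<le> t + 1" using lwalk[OF tC tC'] .

lemmas wsimps = successively_append_iff successively_Cons hd_map last_map walk_ne hd_walk last_walk lB lC

lemma wB: "a \<in> ternary_strings r \<Longrightarrow> c \<in> ternary_strings t \<Longrightarrow> successively (E3C_adj r s t) (map (\<lambda>Y. (a,Y,c,1)) (walk B B'))"
  using walkB_succ tB tB' by blast
lemma wC: "a \<in> ternary_strings r \<Longrightarrow> b \<in> ternary_strings s \<Longrightarrow> successively (E3C_adj r s t) (map (\<lambda>Z. (a,b,Z,0)) (walk C C'))"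
  using walkC_succ tC tC' by blast

end




context S0
begin

lemma pathKF: assumes k: "KF i x \<in> set ks0"
  shows "E3C_path r s t (A,B,C,0) (A,B',C',0) ((A,B,C,0) # M0 (KF i x) @ [(A,B',C',0)]) \<and> length (M0 (KF i x)) + 1 \<le> s + t + 7"
proof -
  have p: "i < t" "x \<le> 2" "x \<noteq> C!i" "x \<noteq> C'!i" using KF_props[OF k] by auto
  let ?C1 = "C[i:=x]" and ?C2 = "C'[i:=x]"
  have t1: "?C1 \<in> ternary_strings t" and t2: "?C2 \<in> ternary_strings t" using tCx tC'x p by auto
  have d1: "differ_one C ?C1" and d2: "differ_one ?C2 C'" using dCx dC'x p by auto
  have ne1: "?C1 \<noteq> C" using d1 differ_one_ne by metis
  have l12: "length ?C1 = length ?C2" using lC by simp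
  have nv: "Z \<noteq> C'" if "Z \<in> set (walk ?C1 ?C2)" for Z using Fwalk[OF p(1) that] p by auto
  have w2: "successively (E3C_adj r s t) (map (\<lambda>Z. (A,B',Z,0)) (walk ?C1 ?C2))"
    using walkC_succ[OF tA tB' t1 t2] .
  have w1: "successively (E3C_adj r s t) (map (\<lambda>Y. (A,Y,?C1,1)) (walk B B'))" using wB[OF tA t1] .
  have a1: "E3C_adj r s t (A,B,C,0) (A,B,?C1,0)" using adjC[OF tA tB tC t1 d1] .
  have a2: "E3C_adj r s t (A,B,?C1,0) (A,B,?C1,1)" using adj0[OF tA tB t1] by simp
  have a3: "E3C_adj r s t (A,B',?C1,1) (A,B',?C1,0)" using adj0[OF tA tB' t1] by simp
  have a4: "E3C_adj r s t (A,B',?C2,0) (A,B',C',0)" using adjC[OF tA tB' t2 tC' d2] .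
  have len: "length (walk ?C1 ?C2) \<le> t + 1" using lwalk[OF t1 t2] .
  show ?thesis
  proof (intro conjI path_intro)
    show "(A,B,C,0) \<noteq> (A,B',C',0)" using BB by simp
    show "distinct (M0 (KF i x))" using BB by (auto simp: distinct_map inj_on_def distinct_walk)
    show "(A,B,C,0) \<notin> set (M0 (KF i x))" using BB ne1 by auto
    show "(A,B',C',0) \<notin> set (M0 (KF i x))" using BB nv by auto
    show "successively (E3C_adj r s t) ((A,B,C,0) # M0 (KF i x) @ [(A,B',C',0)])"
      using w1 w2 a1 a2 a3 a4 l12 by (simp add: wsimps)
    show "length (M0 (KF i x)) + 1 \<le> s + t + 7" using len lwB by simp
  qed
qed


lemma pathKS2:
  shows "E3C_path r s t (A,B,C,0) (A,B',C',0) ((A,B,C,0) # M0 KS2 @ [(A,B',C',0)]) \<and> length (M0 KS2) + 1 \<le> s + t + 7"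
proof -
  have w1: "successively (E3C_adj r s t) (map (\<lambda>Y. (a0,Y,C,1)) (walk B B'))" using wB[OF ta0 tC] .
  have w2: "successively (E3C_adj r s t) (map (\<lambda>Z. (a0,B',Z,0)) (walk C C'))" using wC[OF ta0 tB'] .
  have a1: "E3C_adj r s t (A,B,C,0) (A,B,C,2)" using adj0[OF tA tB tC] by simp
  have a2: "E3C_adj r s t (A,B,C,2) (a0,B,C,2)" using adjA[OF tA tB tC ta0 da0(1)] .
  have a3: "E3C_adj r s t (a0,B,C,2) (a0,B,C,1)" using adj0[OF ta0 tB tC] by simp
  have a4: "E3C_adj r s t (a0,B',C,1) (a0,B',C,0)" using adj0[OF ta0 tB' tC] by simp
  have a5: "E3C_adj r s t (a0,B',C',0) (a0,B',C',2)" using adj0[OF ta0 tB' tC'] by simp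
  have a6: "E3C_adj r s t (a0,B',C',2) (A,B',C',2)" using adjA[OF ta0 tB' tC' tA da0(2)] .
  have a7: "E3C_adj r s t (A,B',C',2) (A,B',C',0)" using adj0[OF tA tB' tC'] by simp
  show ?thesis
  proof (intro conjI path_intro)
    show "(A,B,C,0) \<noteq> (A,B',C',0)" using BB by simp
    show "distinct (M0 KS2)" using BB a0_ne by (auto simp: distinct_map inj_on_def distinct_walk)
    show "(A,B,C,0) \<notin> set (M0 KS2)" using a0_ne by auto
    show "(A,B',C',0) \<notin> set (M0 KS2)" using a0_ne by auto
    show "successively (E3C_adj r s t) ((A,B,C,0) # M0 KS2 @ [(A,B',C',0)])"
      using w1 w2 a1 a2 a3 a4 a5 a6 a7 by (simp add: wsimps)
    show "length (M0 KS2) + 1 \<le> s + t + 7" using lwB lwC by simp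
  qed
qed

lemma pathKS1a: assumes h1: "h = 1"
  shows "E3C_path r s t (A,B,C,0) (A,B',C',0) ((A,B,C,0) # M0 KS1 @ [(A,B',C',0)]) \<and> length (M0 KS1) + 1 \<le> s + t + 7"
proof -
  let ?M = "map (\<lambda>Y. (A,Y,C,1)) (walk B B') @ [(A,B',C,0)] :: vtx list"
  have M: "M0 KS1 = ?M" using h1 by simp
  have w1: "successively (E3C_adj r s t) (map (\<lambda>Y. (A,Y,C,1)) (walk B B'))" using wB[OF tA tC] .
  have a1: "E3C_adj r s t (A,B,C,0) (A,B,C,1)" using adj0[OF tA tB tC] by simp
  have a2: "E3C_adj r s t (A,B',C,1) (A,B',C,0)" using adj0[OF tA tB' tC] by simp
  have a3: "E3C_adj r s t (A,B',C,0) (A,B',C',0)" using adjC[OF tA tB' tC tC' h1_differ[OF h1]] .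
  show ?thesis unfolding M
  proof (intro conjI path_intro)
    show "(A,B,C,0) \<noteq> (A,B',C',0)" using BB by simp
    show "distinct ?M" by (auto simp: distinct_map inj_on_def distinct_walk)
    show "(A,B,C,0) \<notin> set ?M" using BB by auto
    show "(A,B',C',0) \<notin> set ?M" using CC by auto
    show "successively (E3C_adj r s t) ((A,B,C,0) # ?M @ [(A,B',C',0)])"
      using w1 a1 a2 a3 by (simp add: wsimps)
    show "length ?M + 1 \<le> s + t + 7" using lwB by simp
  qed
qed

lemma pathKS1b: assumes h1: "h \<noteq> 1"
  shows "E3C_path r s t (A,B,C,0) (A,B',C',0) ((A,B,C,0) # M0 KS1 @ [(A,B',C',0)]) \<and> length (M0 KS1) + 1 \<le> s + t + 7"
proof -
  let ?M = "[(A,B,C,1), (A,Bo,C,1)] @ map (\<lambda>Z. (A,Bo,Z,0)) (walk C C') @ map (\<lambda>Y. (A,Y,C',1)) (walk Bo B') :: vtx list"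
  have M: "M0 KS1 = ?M" using h1 by simp
  have lBo: "length Bo = length B'" using tBo tB' by (simp add: len_tern)
  have w1: "successively (E3C_adj r s t) (map (\<lambda>Z. (A,Bo,Z,0)) (walk C C'))" using wC[OF tA tBo] .
  have w2: "successively (E3C_adj r s t) (map (\<lambda>Y. (A,Y,C',1)) (walk Bo B'))" using walkB_succ[OF tA tC' tBo tB'] .
  have a1: "E3C_adj r s t (A,B,C,0) (A,B,C,1)" using adj0[OF tA tB tC] by simp
  have a2: "E3C_adj r s t (A,B,C,1) (A,Bo,C,1)" using adjB[OF tA tB tC tBo dBo] .
  have a3: "E3C_adj r s t (A,Bo,C,1) (A,Bo,C,0)" using adj0[OF tA tBo tC] by simp
  have a4: "E3C_adj r s t (A,Bo,C',0) (A,Bo,C',1)" using adj0[OF tA tBo tC'] by simp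
  have a5: "E3C_adj r s t (A,B',C',1) (A,B',C',0)" using adj0[OF tA tB' tC'] by simp
  have nB: "Y \<noteq> B" if "Y \<in> set (walk Bo B')" for Y
  proof
    assume "Y = B"
    from set_walk[OF lBo that] have "Y!kb = Bo!kb \<or> Y!kb = B'!kb" using kb_props lenB tBo by (auto simp: len_tern)
    moreover have "Bo!kb \<noteq> B!kb" using kb_props third[OF Bkb kb_props(2)] lenB by (simp add: Bo_def)
    ultimately show False using \<open>Y = B\<close> kb_props by auto
  qed
  show ?thesis unfolding M
  proof (intro conjI path_intro)
    show "(A,B,C,0) \<noteq> (A,B',C',0)" using BB by simp
    show "distinct ?M" using CC Bo_ne by (auto simp: distinct_map inj_on_def distinct_walk)
    show "(A,B,C,0) \<notin> set ?M" using Bo_ne by auto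
    show "(A,B',C',0) \<notin> set ?M" using Bo_ne by auto
    show "successively (E3C_adj r s t) ((A,B,C,0) # ?M @ [(A,B',C',0)])"
      using w1 w2 a1 a2 a3 a4 a5 lBo by (simp add: wsimps)
    show "length ?M + 1 \<le> s + t + 7" using lwalk[OF tBo tB'] lwC by simp
  qed
qed

lemma pathKOa: assumes h1: "h = 1"
  shows "E3C_path r s t (A,B,C,0) (A,B',C',0) ((A,B,C,0) # M0 (KO i) @ [(A,B',C',0)]) \<and> length (M0 (KO i)) + 1 \<le> s + t + 7"
proof -
  let ?M = "[(A,B,C',0)] @ map (\<lambda>Y. (A,Y,C',1)) (walk B B') :: vtx list"
  have M: "M0 (KO i) = ?M" using h1 by simp
  have w1: "successively (E3C_adj r s t) (map (\<lambda>Y. (A,Y,C',1)) (walk B B'))" using wB[OF tA tC'] .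
  have a1: "E3C_adj r s t (A,B,C,0) (A,B,C',0)" using adjC[OF tA tB tC tC' h1_differ[OF h1]] .
  have a2: "E3C_adj r s t (A,B,C',0) (A,B,C',1)" using adj0[OF tA tB tC'] by simp
  have a3: "E3C_adj r s t (A,B',C',1) (A,B',C',0)" using adj0[OF tA tB' tC'] by simp
  show ?thesis unfolding M
  proof (intro conjI path_intro)
    show "(A,B,C,0) \<noteq> (A,B',C',0)" using BB by simp
    show "distinct ?M" by (auto simp: distinct_map inj_on_def distinct_walk)
    show "(A,B,C,0) \<notin> set ?M" using CC by auto
    show "(A,B',C',0) \<notin> set ?M" using BB by auto
    show "successively (E3C_adj r s t) ((A,B,C,0) # ?M @ [(A,B',C',0)])"
      using w1 a1 a2 a3 by (simp add: wsimps)
    show "length ?M + 1 \<le> s + t + 7" using lwB by simp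
  qed
qed

lemma pathKOb: assumes h1: "h \<noteq> 1" and k: "KO i \<in> set ks0"
  shows "E3C_path r s t (A,B,C,0) (A,B',C',0) ((A,B,C,0) # M0 (KO i) @ [(A,B',C',0)]) \<and> length (M0 (KO i)) + 1 \<le> s + t + 7"
proof -
  have p: "i < r" "i \<in> D" using KO_props[OF k] by auto
  let ?a = "ai i" and ?X = "Cs i" and ?Y = "Cpp i"
  let ?M = "[(A,B,?X,0), (A,B,?X,2), (?a,B,?X,2)] @ map (\<lambda>Y. (?a,Y,?X,1)) (walk B B')
        @ map (\<lambda>Z. (?a,B',Z,0)) (walk ?X ?Y) @ [(?a,B',?Y,2), (A,B',?Y,2), (A,B',?Y,0)] :: vtx list"
  have M: "M0 (KO i) = ?M" using h1 by simp
  have ta: "?a \<in> ternary_strings r" by (rule tai)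
  have tX: "?X \<in> ternary_strings t" using tCs p by auto
  have tY: "?Y \<in> ternary_strings t" using tCpp p h1 by auto
  have lXY: "length ?X = length ?Y" using tX tY by (simp add: len_tern)
  have aA: "?a \<noteq> A" using ai_ne p by auto
  have XC: "?X \<noteq> C" using dCs[OF p(2)] differ_one_ne by metis
  have YC: "?Y \<noteq> C'" using dCpp[OF h1 p(2)] differ_one_ne by metis
  have w1: "successively (E3C_adj r s t) (map (\<lambda>Y. (?a,Y,?X,1)) (walk B B'))" using wB[OF ta tX] .
  have w2: "successively (E3C_adj r s t) (map (\<lambda>Z. (?a,B',Z,0)) (walk ?X ?Y))" using walkC_succ[OF ta tB' tX tY] .
  have a1: "E3C_adj r s t (A,B,C,0) (A,B,?X,0)" using adjC[OF tA tB tC tX dCs[OF p(2)]] .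
  have a2: "E3C_adj r s t (A,B,?X,0) (A,B,?X,2)" using adj0[OF tA tB tX] by simp
  have a3: "E3C_adj r s t (A,B,?X,2) (?a,B,?X,2)" using adjA[OF tA tB tX ta dai(1)[OF p(1)]] .
  have a4: "E3C_adj r s t (?a,B,?X,2) (?a,B,?X,1)" using adj0[OF ta tB tX] by simp
  have a5: "E3C_adj r s t (?a,B',?X,1) (?a,B',?X,0)" using adj0[OF ta tB' tX] by simp
  have a6: "E3C_adj r s t (?a,B',?Y,0) (?a,B',?Y,2)" using adj0[OF ta tB' tY] by simp
  have a7: "E3C_adj r s t (?a,B',?Y,2) (A,B',?Y,2)" using adjA[OF ta tB' tY tA dai(2)[OF p(1)]] .
  have a8: "E3C_adj r s t (A,B',?Y,2) (A,B',?Y,0)" using adj0[OF tA tB' tY] by simp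
  have a9: "E3C_adj r s t (A,B',?Y,0) (A,B',C',0)" using adjC[OF tA tB' tY tC' dCpp[OF h1 p(2)]] .
  have len: "length (walk ?X ?Y) = h - 1" using length_walk[OF lXY] card_CsCpp[OF h1 p(2)] h2[OF h1] by simp
  show ?thesis unfolding M
  proof (intro conjI path_intro)
    show "(A,B,C,0) \<noteq> (A,B',C',0)" using BB by simp
    show "distinct ?M" using BB aA by (auto simp: distinct_map inj_on_def distinct_walk)
    show "(A,B,C,0) \<notin> set ?M" using XC aA BB by auto
    show "(A,B',C',0) \<notin> set ?M" using YC aA BB by auto
    show "successively (E3C_adj r s t) ((A,B,C,0) # ?M @ [(A,B',C',0)])"
      using w1 w2 a1 a2 a3 a4 a5 a6 a7 a8 a9 lXY by (simp add: wsimps)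
    show "length ?M + 1 \<le> s + t + 7" using len lwB h_le h_pos by simp
  qed
qed

lemma path0: assumes "k \<in> set ks0"
  shows "E3C_path r s t (A,B,C,0) (A,B',C',0) ((A,B,C,0) # M0 k @ [(A,B',C',0)]) \<and> length (M0 k) + 1 \<le> s + t + 7"
proof (cases k)
  case KS1 then show ?thesis using pathKS1a pathKS1b by blast
next
  case KS2 then show ?thesis using pathKS2 by blast
next
  case (KF i x) then show ?thesis using pathKF assms by blast
next
  case (KO i) then show ?thesis using pathKOa pathKOb assms by blast
qed

end




context S0
begin

lemma sigF: assumes "KF i x \<in> set ks0" "z \<in> set (M0 (KF i x))"
  shows "z = (A,B,C[i:=x],0) \<or> (\<exists>Y. z = (A,Y,C[i:=x],1)) \<or>
    (\<exists>Z. z = (A,B',Z,0) \<and> Z!i = x \<and> (\<forall>k<t. k \<noteq> i \<longrightarrow> Z!k = C!k \<or> Z!k = C'!k))"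
proof -
  have it: "i < t" using KF_props[OF assms(1)] by auto
  show ?thesis using assms(2) Fwalk[OF it] by auto
qed

lemma sigS1a: "h = 1 \<Longrightarrow> z \<in> set (M0 KS1) \<Longrightarrow> (\<exists>Y. z = (A,Y,C,1)) \<or> z = (A,B',C,0)"
  by auto

lemma sigS1b: "h \<noteq> 1 \<Longrightarrow> z \<in> set (M0 KS1) \<Longrightarrow>
   z = (A,B,C,1) \<or> z = (A,Bo,C,1) \<or> (\<exists>Z. z = (A,Bo,Z,0)) \<or> (\<exists>Y. z = (A,Y,C',1))"
  by auto

lemma sigS2: "z \<in> set (M0 KS2) \<Longrightarrow> z = (A,B,C,2) \<or> z = (A,B',C',2) \<or> fst z = a0"
  by auto

lemma sigOa: "h = 1 \<Longrightarrow> z \<in> set (M0 (KO i)) \<Longrightarrow> z = (A,B,C',0) \<or> (\<exists>Y. z = (A,Y,C',1))"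
  by auto

lemma sigOb: "h \<noteq> 1 \<Longrightarrow> z \<in> set (M0 (KO i)) \<Longrightarrow>
   z = (A,B,Cs i,0) \<or> z = (A,B,Cs i,2) \<or> z = (A,B',Cpp i,2) \<or> z = (A,B',Cpp i,0) \<or> fst z = ai i"
  by auto

lemma updneq: assumes "i < t" "i' < t" "x \<noteq> C!i" "x' \<noteq> C!i'" "(i,x) \<noteq> (i',x')"
  shows "C[i:=x] \<noteq> C[i':=x']"
proof
  assume e: "C[i:=x] = C[i':=x']"
  show False
  proof (cases "i = i'")
    case True
    then have "C[i:=x]!i = C[i':=x']!i" using e by simp
    then show False using True assms lenC by simp
  next
    case False
    then have "C[i:=x]!i = C[i':=x']!i" using e by simp
    then show False using False assms lenC by simp
  qed
qed

lemma Cx_ne: assumes "i < t" "x \<noteq> C!i" "x \<noteq> C'!i"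
  shows "C[i:=x] \<noteq> C" "C[i:=x] \<noteq> C'"
proof -
  have "C[i:=x]!i = x" using assms lenC by simp
  then show "C[i:=x] \<noteq> C" "C[i:=x] \<noteq> C'" using assms by auto
qed

lemma Cx_Cs: assumes "i < t" "x \<noteq> C!i" "x \<noteq> C'!i" "i' \<in> D"
  shows "C[i:=x] \<noteq> Cs i'"
proof
  assume e: "C[i:=x] = Cs i'"
  have "C[i:=x]!i = x" using assms lenC by simp
  moreover have "Cs i' ! i = C'!i \<or> Cs i' ! i = C!i"
    using Cs_nth[OF assms(4)] Cs_nth2[of i i'] by (cases "i = i'") auto
  ultimately show False using e assms by auto
qed

lemma Cs_ne: "i \<in> D \<Longrightarrow> Cs i \<noteq> C" using dCs differ_one_ne by metis
lemma Cpp_ne: "h \<noteq> 1 \<Longrightarrow> i \<in> D \<Longrightarrow> Cpp i \<noteq> C'" using dCpp differ_one_ne by metis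
lemma Cs_inj: assumes "i \<in> D" "i' \<in> D" "i \<noteq> i'" shows "Cs i \<noteq> Cs i'"
proof
  assume "Cs i = Cs i'"
  then have "Cs i ! i = Cs i' ! i" by simp
  then show False using Cs_nth[OF assms(1)] Cs_nth2[of i i'] assms D_iff by auto
qed

lemma disj_pair: assumes k: "k \<in> set ks0" and k': "k' \<in> set ks0" and ne: "k \<noteq> k'"
  and z: "z \<in> set (M0 k)" "z \<in> set (M0 k')"
  shows False
proof (cases k)
  case KS1
  show False
  proof (cases k')
    case KS1 then show False using ne \<open>k = KS1\<close> by simp
  next
    case KS2
    have z1: "z \<in> set (M0 KS1)" "z \<in> set (M0 KS2)" using z \<open>k = KS1\<close> KS2 by auto
    show False
    proof (cases "h = 1")
      case True
      show False using sigS2[OF z1(2)] sigS1a[OF True z1(1)] a0_ne by auto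
    next
      case False
      show False using sigS2[OF z1(2)] sigS1b[OF False z1(1)] a0_ne by auto
    qed
  next
    case (KF i x)
    have p: "i < t" "x \<noteq> C!i" "x \<noteq> C'!i" using KF_props k' KF by auto
    have "z \<in> set (M0 (KF i x))" using z KF by simp
    note sf = sigF[OF k'[unfolded KF] this]
    show False
    proof (cases "h = 1")
      case True
      show False using sf sigS1a[OF True, of z] z \<open>k = KS1\<close> Cx_ne[OF p] BB p by auto
    next
      case False
      show False using sf sigS1b[OF False, of z] z \<open>k = KS1\<close> Cx_ne[OF p] Bo_ne by auto
    qed
  next
    case (KO i)
    have p: "i < r" "i \<in> D" using KO_props k' KO by auto
    show False
    proof (cases "h = 1")
      case True
      show False using sigOa[OF True, of z i] sigS1a[OF True, of z] z \<open>k = KS1\<close> KO CC BB by auto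
    next
      case False
      show False using sigOb[OF False, of z i] sigS1b[OF False, of z] z \<open>k = KS1\<close> KO Bo_ne ai_ne[OF p(1)] by auto
    qed
  qed
next
  case KS2
  show False
  proof (cases k')
    case KS1
    have z1: "z \<in> set (M0 KS1)" "z \<in> set (M0 KS2)" using z \<open>k = KS2\<close> KS1 by auto
    show False
    proof (cases "h = 1")
      case True
      show False using sigS2[OF z1(2)] sigS1a[OF True z1(1)] a0_ne by auto
    next
      case False
      show False using sigS2[OF z1(2)] sigS1b[OF False z1(1)] a0_ne by auto
    qed
  next
    case KS2 then show False using ne \<open>k = KS2\<close> by simp
  next
    case (KF i x)
    have "z \<in> set (M0 (KF i x))" using z KF by simp
    note sf = sigF[OF k'[unfolded KF] this]
    show False using sf sigS2[of z] z \<open>k = KS2\<close> a0_ne by auto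
  next
    case (KO i)
    have p: "i < r" "i \<in> D" using KO_props k' KO by auto
    show False
    proof (cases "h = 1")
      case True
      show False using sigOa[OF True, of z i] sigS2[of z] z \<open>k = KS2\<close> KO a0_ne by auto
    next
      case False
      have z1: "z \<in> set (M0 KS2)" "z \<in> set (M0 (KO i))" using z \<open>k = KS2\<close> KO by auto
      show False using sigOb[OF False z1(2)] sigS2[OF z1(1)] ai_a0[OF p(1)]
          Cs_ne[OF p(2)] Cpp_ne[OF False p(2)] BB a0_ne ai_ne[OF p(1)] by auto
    qed
  qed
next
  case (KF i x)
  have p: "i < t" "x \<noteq> C!i" "x \<noteq> C'!i" using KF_props k KF by auto
  have "z \<in> set (M0 (KF i x))" using z KF by simp
  note sf = sigF[OF k[unfolded KF] this]
  show False
  proof (cases k')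
    case KS1
    show False
    proof (cases "h = 1")
      case True
      show False using sf sigS1a[OF True, of z] z KS1 Cx_ne[OF p] BB p by auto
    next
      case False
      show False using sf sigS1b[OF False, of z] z KS1 Cx_ne[OF p] Bo_ne by auto
    qed
  next
    case KS2
    show False using sf sigS2[of z] z KS2 a0_ne by auto
  next
    case (KF i' x')
    have p': "i' < t" "x' \<noteq> C!i'" "x' \<noteq> C'!i'" using KF_props k' KF by auto
    have ix: "(i,x) \<noteq> (i',x')" using ne \<open>k = KF i x\<close> KF by auto
    have "z \<in> set (M0 (KF i' x'))" using z KF by simp
    note sf' = sigF[OF k'[unfolded KF] this]
    have cne: "C[i:=x] \<noteq> C[i':=x']" using updneq[OF p(1) p'(1) p(2) p'(2) ix] .
    show False
    proof (cases "i = i'")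
      case True
      from sf sf' show False
        by (elim disjE exE conjE) (use cne BB True ix in auto)
    next
      case False
      have nZ: "\<not> (Z!i = x \<and> (\<forall>k<t. k \<noteq> i' \<longrightarrow> Z!k = C!k \<or> Z!k = C'!k))" for Z
        using False p by auto
      from sf sf' show False
        by (elim disjE exE conjE) (use cne BB nZ in auto)
    qed
  next
    case (KO i')
    have p': "i' < r" "i' \<in> D" using KO_props k' KO by auto
    show False
    proof (cases "h = 1")
      case True
      show False using sf sigOa[OF True, of z i'] z KO Cx_ne[OF p] BB by auto
    next
      case False
      have cs: "C[i:=x] \<noteq> Cs i'" using Cx_Cs[OF p p'(2)] .
      have cpp: "Cpp i' ! i = C!i \<or> Cpp i' ! i = C'!i" using Cpp_nth p by auto
      show False using sf sigOb[OF False, of z i'] z KO cs cpp p ai_ne[OF p'(1)] BB by auto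
    qed
  qed
next
  case (KO i)
  have p: "i < r" "i \<in> D" using KO_props k KO by auto
  show False
  proof (cases k')
    case KS1
    show False
    proof (cases "h = 1")
      case True
      show False using sigOa[OF True, of z i] sigS1a[OF True, of z] z KS1 \<open>k = KO i\<close> CC BB by auto
    next
      case False
      show False using sigOb[OF False, of z i] sigS1b[OF False, of z] z KS1 \<open>k = KO i\<close> Bo_ne ai_ne[OF p(1)] by auto
    qed
  next
    case KS2
    show False
    proof (cases "h = 1")
      case True
      show False using sigOa[OF True, of z i] sigS2[of z] z KS2 \<open>k = KO i\<close> a0_ne by auto
    next
      case False
      have z1: "z \<in> set (M0 KS2)" "z \<in> set (M0 (KO i))" using z \<open>k = KO i\<close> KS2 by auto
      show False using sigOb[OF False z1(2)] sigS2[OF z1(1)] ai_a0[OF p(1)]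
          Cs_ne[OF p(2)] Cpp_ne[OF False p(2)] BB a0_ne ai_ne[OF p(1)] by auto
    qed
  next
    case (KF i' x')
    have p': "i' < t" "x' \<noteq> C!i'" "x' \<noteq> C'!i'" using KF_props k' KF by auto
    have "z \<in> set (M0 (KF i' x'))" using z KF by simp
    note sf = sigF[OF k'[unfolded KF] this]
    show False
    proof (cases "h = 1")
      case True
      show False using sf sigOa[OF True, of z i] z \<open>k = KO i\<close> Cx_ne[OF p'] BB by auto
    next
      case False
      have cs: "C[i':=x'] \<noteq> Cs i" using Cx_Cs[OF p' p(2)] .
      have cpp: "Cpp i ! i' = C!i' \<or> Cpp i ! i' = C'!i'" using Cpp_nth p' by auto
      show False using sf sigOb[OF False, of z i] z \<open>k = KO i\<close> cs cpp p' ai_ne[OF p(1)] BB by auto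
    qed
  next
    case (KO i')
    have p': "i' < r" "i' \<in> D" using KO_props k' KO by auto
    have ii: "i \<noteq> i'" using ne \<open>k = KO i\<close> KO by auto
    show False
    proof (cases "h = 1")
      case True
      show False using h1_uniq[OF True p(2) p'(2)] ii by simp
    next
      case False
      have "ai i \<noteq> ai i'" using ai_inj p p' ii by blast
      moreover have "Cs i \<noteq> Cs i'" using Cs_inj p p' ii by blast
      moreover have "Cpp i \<noteq> Cpp i'" using Cpp_inj[OF False] p p' ii by blast
      ultimately show False using sigOb[OF False, of z i] sigOb[OF False, of z i'] z \<open>k = KO i\<close> KO
          ai_ne[OF p(1)] ai_ne[OF p'(1)] BB by auto
    qed
  qed
qed

theorem main0: "\<exists>P. length P = 2*r+2 \<and> (\<forall>i<length P. E3C_path r s t (A,B,C,0) (A,B',C',0) (P!i) \<and> path_len (P!i) \<le> s+t+7) \<and>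
     (\<forall>i<length P. \<forall>j<length P. i \<noteq> j \<longrightarrow> internally_disjoint (A,B,C,0) (A,B',C',0) (P!i) (P!j))"
proof -
  have "\<And>k k'. k \<in> set ks0 \<Longrightarrow> k' \<in> set ks0 \<Longrightarrow> k \<noteq> k' \<Longrightarrow> set (M0 k) \<inter> set (M0 k') = {}"
    using disj_pair by blast
  then show ?thesis
    using assemble[OF ks0_distinct, where r=r and s=s and t=t and u="(A,B,C,0)" and M=M0 and v="(A,B',C',0)" and L="s+t+7"]
      path0 ks0_len by auto
qed

end


definition sw :: "nat \<Rightarrow> nat" where "sw d = (if d = 0 then 1 else if d = 1 then 0 else d)"

fun phi :: "vtx \<Rightarrow> vtx" where "phi (A,B,C,d) = (A,C,B,sw d)"

lemma sw_sw[simp]: "sw (sw d) = d" unfolding sw_def by auto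
lemma phi_phi[simp]: "phi (phi x) = x" by (cases x) auto
lemma inj_phi: "inj phi" by (metis injI phi_phi)

lemma sw0: "sw d = 0 \<longleftrightarrow> d = 1" unfolding sw_def by auto
lemma sw1: "sw d = Suc 0 \<longleftrightarrow> d = 0" unfolding sw_def by auto
lemma sw2: "sw d = 2 \<longleftrightarrow> d = 2" unfolding sw_def by auto
lemma sw_inj: "sw a = sw b \<longleftrightarrow> a = b" by (metis sw_sw)

lemma inj_on_phi: "inj_on phi X" by (meson inj_phi inj_on_subset subset_UNIV)

lemma vert_phi: "x \<in> E3C_vertices r t s \<Longrightarrow> phi x \<in> E3C_vertices r s t"
  by (cases x) (auto simp: E3C_vertices_def sw_def)

lemma adj_phi: "E3C_adj r t s x y \<Longrightarrow> E3C_adj r s t (phi x) (phi y)"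
proof -
  assume a: "E3C_adj r t s x y"
  obtain A B C d where x: "x = (A,B,C,d)" by (cases x) auto
  obtain A' B' C' d' where y: "y = (A',B',C',d')" by (cases y) auto
  have v: "phi x \<in> E3C_vertices r s t" "phi y \<in> E3C_vertices r s t"
    using a vert_phi unfolding E3C_adj_def by blast+
  have ne: "phi x \<noteq> phi y" using a inj_phi unfolding E3C_adj_def by (metis phi_phi)
  have d: "d \<in> {0,1,2}" "d' \<in> {0,1,2}" using a unfolding x y E3C_adj_def E3C_vertices_def by auto
  have c: "(A = A' \<and> B = B' \<and> C = C' \<and> d \<noteq> d') \<or>
        (d = 0 \<and> d' = 0 \<and> A = A' \<and> B = B' \<and> differ_one C C') \<or>
        (d = 1 \<and> d' = 1 \<and> A = A' \<and> C = C' \<and> differ_one B B') \<or>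
        (d = 2 \<and> d' = 2 \<and> B = B' \<and> C = C' \<and> differ_one A A')"
    using a unfolding x y E3C_adj_def by simp
  have "(A = A' \<and> C = C' \<and> B = B' \<and> sw d \<noteq> sw d') \<or>
        (sw d = 0 \<and> sw d' = 0 \<and> A = A' \<and> C = C' \<and> differ_one B B') \<or>
        (sw d = 1 \<and> sw d' = 1 \<and> A = A' \<and> B = B' \<and> differ_one C C') \<or>
        (sw d = 2 \<and> sw d' = 2 \<and> C = C' \<and> B = B' \<and> differ_one A A')"
    using c by (simp add: sw0 sw1 sw2 sw_inj) blast
  then show ?thesis using v ne unfolding x y E3C_adj_def by simp
qed

lemma path_phi: assumes "E3C_path r t s u v p" shows "E3C_path r s t (phi u) (phi v) (map phi p)"
proof -
  have a: "p \<noteq> []" "hd p = u" "last p = v" "distinct p" "\<forall>i. Suc i < length p \<longrightarrow> E3C_adj r t s (p!i) (p!Suc i)"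
    using assms unfolding E3C_path_def by auto
  have "distinct (map phi p)" using a(4) by (simp add: distinct_map inj_on_phi)
  moreover have "\<forall>i. Suc i < length (map phi p) \<longrightarrow> E3C_adj r s t (map phi p ! i) (map phi p ! Suc i)"
    using a(5) adj_phi by simp
  ultimately show ?thesis using a(1-3) unfolding E3C_path_def by (simp add: hd_map last_map)
qed

lemma path_len_phi: "path_len (map phi p) = path_len p" unfolding path_len_def by simp

lemma disj_phi: assumes "internally_disjoint u v p q"
  shows "internally_disjoint (phi u) (phi v) (map phi p) (map phi q)"
proof -
  have "set (map phi p) \<inter> set (map phi q) = phi ` (set p \<inter> set q)"
    by (simp add: image_Int[OF inj_phi])
  also have "\<dots> \<subseteq> phi ` {u,v}" using assms unfolding internally_disjoint_def by blast
  finally show ?thesis unfolding internally_disjoint_def by simp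
qed


theorem lemma9:
  fixes r s t :: nat and A A' B B' C C' :: "nat list" and d d' :: nat
  assumes "1 \<le> r" and "r \<le> s" and "s \<le> t"
    and "(A, B, C, d) \<in> E3C_vertices r s t"
    and "(A', B', C', d') \<in> E3C_vertices r s t"
    and "A = A'" and "B \<noteq> B'" and "C \<noteq> C'" and "d = d'"
  shows "\<exists>P :: vtx list list. length P = 2 * r + 2 \<and>
           (\<forall>i < length P. E3C_path r s t (A, B, C, d) (A', B', C', d') (P ! i) \<and>
              path_len (P ! i) \<le> (if d \<in> {0, 1} then s + t + 7 else s + t + 5)) \<and>
           (\<forall>i < length P. \<forall>j < length P. i \<noteq> j \<longrightarrow>
              internally_disjoint (A, B, C, d) (A', B', C', d') (P ! i) (P ! j))"
proof -
  have t: "A \<in> ternary_strings r" "B \<in> ternary_strings s" "C \<in> ternary_strings t"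
    "B' \<in> ternary_strings s" "C' \<in> ternary_strings t" "d \<in> {0,1,2}"
    using assms(4,5) by (auto simp: E3C_vertices_def)
  from t(6) consider "d = 0" | "d = 1" | "d = 2" by auto
  then show ?thesis
  proof cases
    case 1
    interpret S0 r s t A B C B' C' using assms t by unfold_locales auto
    show ?thesis using main0 1 assms(6,9) by simp
  next
    case 3
    interpret S2 r s t A B C B' C' using assms t by unfold_locales auto
    show ?thesis using main2 3 assms(6,9) by simp
  next
    case 2
    interpret S0 r t s A C B C' B' using assms t by unfold_locales auto
    obtain P where P: "length P = 2*r+2"
      "\<forall>i<length P. E3C_path r t s (A,C,B,0) (A,C',B',0) (P!i) \<and> path_len (P!i) \<le> t+s+7"
      "\<forall>i<length P. \<forall>j<length P. i \<noteq> j \<longrightarrow> internally_disjoint (A,C,B,0) (A,C',B',0) (P!i) (P!j)"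
      using main0 by blast
    have e1: "phi (A,C,B,0) = (A,B,C,1)" "phi (A,C',B',0) = (A,B',C',1)" by (auto simp: sw_def)
    show ?thesis
    proof (intro exI conjI allI impI)
      show "length (map (map phi) P) = 2*r+2" using P(1) by simp
      fix i assume i: "i < length (map (map phi) P)"
      show "E3C_path r s t (A, B, C, d) (A', B', C', d') (map (map phi) P ! i)"
        using path_phi[of r t s "(A,C,B,0)" "(A,C',B',0)" "P!i"] P(2) i e1 2 assms(6,9) by simp
      have "path_len (P!i) \<le> t+s+7" using P(2) i by simp
      then show "path_len (map (map phi) P ! i) \<le> (if d \<in> {0, 1} then s + t + 7 else s + t + 5)"
        using i 2 path_len_phi by simp
      fix j assume j: "j < length (map (map phi) P)" and ij: "i \<noteq> j"
      show "internally_disjoint (A, B, C, d) (A', B', C', d') (map (map phi) P ! i) (map (map phi) P ! j)"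
        using disj_phi[of "(A,C,B,0)" "(A,C',B',0)" "P!i" "P!j"] P(3) i j ij e1 2 assms(6,9) by simp
    qed
  qed
qed

end
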